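(* Let $n\ge 6$ and $0\le \tau\le n-5$, and let $\Gamma_{n,\tau}$ be the signed graph defined in the context. Then: (i) $\lambda_1(\Gamma_{n,\tau})\le \lambda_1(\Gamma_{n,0})=\lambda_1(\Gamma_{n,n-5})$, with equality if and only if $\tau\in\{0,n-5\}$; (ii) $\lambda_1(\Gamma_{n,0})>n-4$, and $\lambda_1(\Gamma_{n,0})$ equals the largest root of $\lambda^3-(n-6)\lambda^2-3(n-4)\lambda-n+3=0$.
   Context: A signed graph is a simple graph whose edges carry signs $\pm1$; its adjacency matrix has entry $\sigma(uv)$ for adjacent $u,v$ and $0$ otherwise, and $\lambda_1(\cdot)$ denotes the largest eigenvalue of this matrix. For integers $n\ge 6$ and $0\le\tau\le n-5$, $\Gamma_{n,\tau}$ is the signed graph with vertex set $\{v_1,v_2,v_3,v_5\}\cup X\cup Y$ (disjoint union), where $|X|=\tau$, $|Y|=n-4-\tau$, and $v_4\in Y$, whose edges are: $v_1v_2$ (the only negative edge); $v_2v_3$; $v_1v_5$; $v_1x$ for all $x\in X$; $v_5x$ for all $x\in X$; $v_5y$ and $v_3y$ for all $y\in Y$; and all edges among vertices of $X\cup Y$ (so $X\cup Y$ induces a complete graph). There are no other edges; in particular $v_2$ has degree $2$, $v_1$ has degree $\tau+2$, $v_3v_5$ is not an edge, and $v_1v_2v_3v_4v_5v_1$ is an induced cycle. All edges other than $v_1v_2$ are positive. *)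

theory Defs
  imports "Jordan_Normal_Form.Char_Poly"
begin

(* Largest eigenvalue of a real square matrix (for the symmetric adjacency
   matrices below all eigenvalues are real). *)
definition lambda1 :: "real mat \<Rightarrow> real" where
  "lambda1 A = Max {k. eigenvalue A k}"

(* Vertex labelling of Gamma_{n,tau} on {0..<n}:
   v1 = 0, v2 = 1, v3 = 2, v5 = 3,
   X = {4 ..< 4+tau}, Y = {4+tau ..< n}  (v4 is any element of Y). *)
definition Gam_sign :: "nat \<Rightarrow> nat \<Rightarrow> nat \<Rightarrow> nat \<Rightarrow> real" where
  "Gam_sign n \<tau> i j =
    (let inX = (\<lambda>x. 4 \<le> x \<and> x < 4 + \<tau>);
         inY = (\<lambda>y. 4 + \<tau> \<le> y \<and> y < n);
         inXY = (\<lambda>z. 4 \<le> z \<and> z < n);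
         adj = (\<lambda>a b. (a = 0 \<and> b = 1) \<or> (a = 1 \<and> b = 2) \<or> (a = 0 \<and> b = 3)
                     \<or> (a = 0 \<and> inX b) \<or> (a = 3 \<and> inX b)
                     \<or> (a = 3 \<and> inY b) \<or> (a = 2 \<and> inY b)
                     \<or> (inXY a \<and> inXY b \<and> a \<noteq> b))
     in if {i, j} = {0, 1} then -1
        else if adj i j \<or> adj j i then 1 else 0)"

definition Gamma_mat :: "nat \<Rightarrow> nat \<Rightarrow> real mat" where
  "Gamma_mat n \<tau> = mat n n (\<lambda>(i, j). Gam_sign n \<tau> i j)"

end

theory Submission
  imports Defs "Jordan_Normal_Form.Spectral_Radius"
begin


definition Pp :: "real \<Rightarrow> real \<Rightarrow> real \<Rightarrow> real" where
  "Pp k t s = (k^6 - k^5*t - k^5*s + 2*k^5 - 3*k^4*t - 3*k^4*s - 2*k^4 + 2*k^3*t*s - k^3*t + k^3*s - 6*k^3 + 3*k^2*t*s + 4*k^2*t + 7*k^2*s - 2*k^2 + k*t*s + 4*k*t + 5*k*s + 2*k + t + s + 1)"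
lemma cert:
  fixes k t s a b c d x y :: real
  assumes e0: "k*a + b - d - t*x = 0" and e1: "a + k*b - c = 0" and e2: "- b + k*c - s*y = 0"
    and e3: "- a + k*d - t*x - s*y = 0" and e4: "- a - d + (k - t + 1)*x - s*y = 0"
    and e5: "- c - d - t*x + (k - s + 1)*y = 0"
  shows "Pp k t s * a = 0 \<and> Pp k t s * b = 0 \<and> Pp k t s * c = 0 \<and> Pp k t s * d = 0 \<and> Pp k t s * x = 0 \<and> Pp k t s * y = 0"
proof -
  have h0: "Pp k t s * a = (k^5 - k^4*t - k^4*s + 2*k^4 - 2*k^3*t - 3*k^3*s + k^2*t*s - k^2*s - 2*k^2 + k*t*s + 2*k*t + 2*k*s - k + t + s)*(k*a + b - d - t*x) + (- (k^4) + k^3*t + k^3*s - 2*k^3 + 2*k^2*t + 3*k^2*s - k^2 + k*t + 3*k*s + s)*(a + k*b - c) + (- (k^3) + k^2*t*s + k^2*t + 2*k^2*s - 2*k^2 + k*t*s + 2*k*t + 3*k*s - k + t + s)*(- b + k*c - s*y) + (k^4 - k^3*s + 2*k^3 - 2*k^2*s - k*s - 2*k - 1)*(- a + k*d - t*x - s*y) + (k^4*t - k^3*t*s + 2*k^3*t - 2*k^2*t*s - k*t*s - 2*k*t - t)*(- a - d + (k - t + 1)*x - s*y) + (k^3*t*s + k^3*s + k^2*t*s - 2*k*s - s)*(- c - d - t*x + (k - s + 1)*y)"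
    unfolding Pp_def by (simp add: algebra_simps eval_nat_numeral)
  have h1: "Pp k t s * b = (- (k^4) + k^3*t + k^3*s - 2*k^3 + 2*k^2*t + 3*k^2*s - k^2 + k*t + 3*k*s + s)*(k*a + b - d - t*x) + (k^5 - k^4*t - k^4*s + 2*k^4 - 3*k^3*t - 3*k^3*s + 2*k^2*t*s - 3*k^2*t - k^2*s - 2*k^2 + 3*k*t*s - k*t + 2*k*s - k + t*s + s)*(a + k*b - c) + (k^4 - k^3*t - k^3*s + 2*k^3 - 3*k^2*t - 2*k^2*s - 3*k*t - k*s - 2*k - t - 1)*(- b + k*c - s*y) + (- (k^3) + 2*k^2*s - 2*k^2 + 3*k*s - k + s)*(- a + k*d - t*x - s*y) + (- (k^3)*t + 2*k^2*t*s - 2*k^2*t + 3*k*t*s - k*t + t*s)*(- a - d + (k - t + 1)*x - s*y) + (k^3*s - 2*k^2*t*s - 3*k*t*s - 2*k*s - t*s - s)*(- c - d - t*x + (k - s + 1)*y)"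
    unfolding Pp_def by (simp add: algebra_simps eval_nat_numeral)
  have h2: "Pp k t s * c = (- (k^3) + k^2*t*s + k^2*t + 2*k^2*s - 2*k^2 + k*t*s + 2*k*t + 3*k*s - k + t + s)*(k*a + b - d - t*x) + (k^4 - k^3*t - k^3*s + 2*k^3 - 3*k^2*t - 2*k^2*s - 3*k*t - k*s - 2*k - t - 1)*(a + k*b - c) + (k^5 - k^4*t - k^4*s + 2*k^4 - 3*k^3*t - 2*k^3*s - k^3 + k^2*t*s - 2*k^2*t + k^2*s - 4*k^2 + k*t*s + k*t + 3*k*s - 2*k + t + s)*(- b + k*c - s*y) + (k^3*s + k^2*s - k^2 - 2*k - 1)*(- a + k*d - t*x - s*y) + (k^3*t*s + k^2*t*s - k^2*t - 2*k*t - t)*(- a - d + (k - t + 1)*x - s*y) + (k^4*s - k^3*t*s + k^3*s - 2*k^2*t*s - 2*k^2*s - k*t*s - 3*k*s - s)*(- c - d - t*x + (k - s + 1)*y)"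
    unfolding Pp_def by (simp add: algebra_simps eval_nat_numeral)
  have h3: "Pp k t s * d = (k^4 - k^3*s + 2*k^3 - 2*k^2*s - k*s - 2*k - 1)*(k*a + b - d - t*x) + (- (k^3) + 2*k^2*s - 2*k^2 + 3*k*s - k + s)*(a + k*b - c) + (k^3*s + k^2*s - k^2 - 2*k - 1)*(- b + k*c - s*y) + (k^5 - k^4*t - k^4*s + 2*k^4 - 2*k^3*t - 2*k^3*s - k^3 + 2*k^2*t*s + k^2*t + k^2*s - 4*k^2 + k*t*s + 3*k*t + 3*k*s - 2*k + t + s)*(- a + k*d - t*x - s*y) + (k^4*t + 2*k^3*t - 2*k^2*t*s - k^2*t - k*t*s - 3*k*t - t)*(- a - d + (k - t + 1)*x - s*y) + (k^4*s + k^3*s - 2*k^2*s - 3*k*s - s)*(- c - d - t*x + (k - s + 1)*y)"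
    unfolding Pp_def by (simp add: algebra_simps eval_nat_numeral)
  have h4: "Pp k t s * x = (k^4 - k^3*s + 2*k^3 - 2*k^2*s - k*s - 2*k - 1)*(k*a + b - d - t*x) + (- (k^3) + 2*k^2*s - 2*k^2 + 3*k*s - k + s)*(a + k*b - c) + (k^3*s + k^2*s - k^2 - 2*k - 1)*(- b + k*c - s*y) + (k^4 + 2*k^3 - 2*k^2*s - k^2 - k*s - 3*k - 1)*(- a + k*d - t*x - s*y) + (k^5 - k^4*s + k^4 - 2*k^3*s - 3*k^3 + 3*k^2*s - 3*k^2 + 4*k*s + k + s + 1)*(- a - d + (k - t + 1)*x - s*y) + (k^4*s + k^3*s - 2*k^2*s - 3*k*s - s)*(- c - d - t*x + (k - s + 1)*y)"
    unfolding Pp_def by (simp add: algebra_simps eval_nat_numeral)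
  have h5: "Pp k t s * y = (k^3*t + k^3 + k^2*t - 2*k - 1)*(k*a + b - d - t*x) + (k^3 - 2*k^2*t - 3*k*t - 2*k - t - 1)*(a + k*b - c) + (k^4 - k^3*t + k^3 - 2*k^2*t - 2*k^2 - k*t - 3*k - 1)*(- b + k*c - s*y) + (k^4 + k^3 - 2*k^2 - 3*k - 1)*(- a + k*d - t*x - s*y) + (k^4*t + k^3*t - 2*k^2*t - 3*k*t - t)*(- a - d + (k - t + 1)*x - s*y) + (k^5 - k^4*t + k^4 - 2*k^3*t - 3*k^3 + k^2*t - 3*k^2 + 3*k*t + k + t + 1)*(- c - d - t*x + (k - s + 1)*y)"
    unfolding Pp_def by (simp add: algebra_simps eval_nat_numeral)
  show ?thesis unfolding h0 h1 h2 h3 h4 h5 e0 e1 e2 e3 e4 e5 by simp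
qed
lemma colvec:
  fixes k t s :: real
  assumes "w0 = (k^4 - k^3*s + 2*k^3 - 2*k^2*s - k*s - 2*k - 1)"
  assumes "w1 = (- (k^3) + 2*k^2*s - 2*k^2 + 3*k*s - k + s)"
  assumes "w2 = (k^3*s + k^2*s - k^2 - 2*k - 1)"
  assumes "w3 = (k^5 - k^4*t - k^4*s + 2*k^4 - 2*k^3*t - 2*k^3*s - k^3 + 2*k^2*t*s + k^2*t + k^2*s - 4*k^2 + k*t*s + 3*k*t + 3*k*s - 2*k + t + s)"
  assumes "w4 = (k^4 + 2*k^3 - 2*k^2*s - k^2 - k*s - 3*k - 1)"
  assumes "w5 = (k^4 + k^3 - 2*k^2 - 3*k - 1)"
  shows "(k*w0 + w1 - w3 - t*w4) = 0" and "(w0 + k*w1 - w2) = 0" and "(- w1 + k*w2 - s*w5) = 0" and "(- w0 + k*w3 - t*w4 - s*w5) = Pp k t s" and "(- w0 - w3 + (k - t + 1)*w4 - s*w5) = 0" and "(- w2 - w3 - t*w4 + (k - s + 1)*w5) = 0"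
  unfolding assms Pp_def by (simp_all add: algebra_simps eval_nat_numeral)
lemma Pp_factor: "Pp k t s = (k+1)*(k^3 - (t+s-2)*k^2 - 3*(t+s)*k - (t+s) - 1)*(k^2-k-1) + t*(s-1)*k*(k+1)*(2*k+1)"
  unfolding Pp_def by (simp add: algebra_simps eval_nat_numeral)


lemma gs_X: "4 \<le> j \<Longrightarrow> j < 4+\<tau> \<Longrightarrow> 4+\<tau> < n \<Longrightarrow> i < n \<Longrightarrow>
  Gam_sign n \<tau> i j = (if i=0 \<or> i=3 then 1 else if i=1 \<or> i=2 then 0 else if j=i then 0 else 1)"
  by (auto simp: Gam_sign_def Let_def doubleton_eq_iff)

lemma gs_Y: "4+\<tau> \<le> j \<Longrightarrow> j < n \<Longrightarrow> i < n \<Longrightarrow>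
  Gam_sign n \<tau> i j = (if i=2 \<or> i=3 then 1 else if i=0 \<or> i=1 then 0 else if j=i then 0 else 1)"
  by (auto simp: Gam_sign_def Let_def doubleton_eq_iff)

lemma gs_0: "i < n \<Longrightarrow> Gam_sign n \<tau> i 0 = (if i=1 then -1 else if i=3 \<or> (4\<le>i \<and> i<4+\<tau>) then 1 else 0)"
  by (auto simp: Gam_sign_def Let_def doubleton_eq_iff)
lemma gs_1: "i < n \<Longrightarrow> Gam_sign n \<tau> i 1 = (if i=0 then -1 else if i=2 then 1 else 0)"
  by (auto simp: Gam_sign_def Let_def doubleton_eq_iff)
lemma gs_1': "i < n \<Longrightarrow> Gam_sign n \<tau> i (Suc 0) = (if i=0 then -1 else if i=2 then 1 else 0)"
  by (auto simp: Gam_sign_def Let_def doubleton_eq_iff)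
lemma gs_2: "i < n \<Longrightarrow> 4+\<tau> < n \<Longrightarrow> Gam_sign n \<tau> i 2 = (if i=1 then 1 else if 4+\<tau> \<le> i then 1 else 0)"
  by (auto simp: Gam_sign_def Let_def doubleton_eq_iff)
lemma gs_3: "i < n \<Longrightarrow> Gam_sign n \<tau> i 3 = (if i=0 then 1 else if 4 \<le> i then 1 else 0)"
  by (auto simp: Gam_sign_def Let_def doubleton_eq_iff)

lemma sum_skip: "finite A \<Longrightarrow> (\<Sum>j\<in>A. (if j = i then 0 else (f j::real))) = sum f A - (if i \<in> A then f i else 0)"
proof -
  assume fa: "finite A"
  have "(\<Sum>j\<in>A. (if j = i then 0 else f j)) = (\<Sum>j\<in>A. f j - (if j = i then f j else 0))"
    by (rule sum.cong) auto
  also have "\<dots> = sum f A - (\<Sum>j\<in>A. (if j = i then f j else 0))" by (simp add: sum_subtractf)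
  also have "(\<Sum>j\<in>A. (if j = i then f j else 0)) = (if i \<in> A then f i else 0)"
    using fa by (simp add: sum.delta)
  finally show ?thesis .
qed

lemma gam_row:
  assumes n: "4+\<tau> < n" and v: "v \<in> carrier_vec n" and i: "i < n"
  shows "(Gamma_mat n \<tau> *\<^sub>v v) $ i =
    (let SX = (\<Sum>j\<in>{4..<4+\<tau>}. v$j); SY = (\<Sum>j\<in>{4+\<tau>..<n}. v$j) in
     if i = 0 then - v$1 + v$3 + SX else if i=1 then - v$0 + v$2 else if i=2 then v$1 + SY
     else if i=3 then v$0+SX+SY else if i < 4+\<tau> then v$0+v$3+SX+SY - v$i
     else v$2+v$3+SX+SY-v$i)"
proof -
  let ?g = "\<lambda>j. Gam_sign n \<tau> i j * v$j"
  have dv: "dim_vec v = n" using v by auto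
  have "(Gamma_mat n \<tau> *\<^sub>v v) $ i = (\<Sum>j\<in>{0..<n}. ?g j)"
    using i dv by (simp add: Gamma_mat_def scalar_prod_def row_def)
  also have "\<dots> = sum ?g {0..<4} + sum ?g {4..<4+\<tau>} + sum ?g {4+\<tau>..<n}"
    using n by (simp add: sum.atLeastLessThan_concat)
  also have "sum ?g {0..<4} = ?g 0 + ?g 1 + ?g 2 + ?g 3"
    by (simp add: numeral_eq_Suc)
  also have "sum ?g {4..<4+\<tau>} = (\<Sum>j\<in>{4..<4+\<tau>}. (if i=0 \<or> i=3 then v$j else if i=1 \<or> i=2 then 0 else if j=i then 0 else v$j))"
    by (rule sum.cong, simp, subst gs_X, insert n i, auto)
  also have "sum ?g {4+\<tau>..<n} = (\<Sum>j\<in>{4+\<tau>..<n}. (if i=2 \<or> i=3 then v$j else if i=0 \<or> i=1 then 0 else if j=i then 0 else v$j))"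
    by (rule sum.cong, simp, subst gs_Y, insert n i, auto)
  finally show ?thesis using i n
    by (auto simp: Let_def gs_0 gs_1 gs_1' gs_2 gs_3 sum_skip)
qed

definition ff :: "nat \<Rightarrow> real \<Rightarrow> real" where
  "ff n x = x ^ 3 - (real n - 6) * x\<^sup>2 - 3 * (real n - 4) * x - real n + 3"

lemma Pp_gen: "Pp k t (N - 4 - t) = (k+1)*(k ^ 3 - (N - 6) * k\<^sup>2 - 3 * (N - 4) * k - N + 3)*(k^2-k-1) + t*(N - 4 - t - 1)*k*(k+1)*(2*k+1)"
  unfolding Pp_def by (simp add: algebra_simps eval_nat_numeral)

lemma Pp_ff:
  assumes "4 + \<tau> < n"
  shows "Pp k (real \<tau>) (real (n-4-\<tau>)) = (k+1)*ff n k*(k^2-k-1) + real \<tau>*(real (n-4-\<tau>)-1)*k*(k+1)*(2*k+1)"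
proof -
  have e: "real (n-4-\<tau>) = real n - 4 - real \<tau>" using assms by auto
  show ?thesis unfolding ff_def e by (rule Pp_gen)
qed

lemma carrier_G: "Gamma_mat n \<tau> \<in> carrier_mat n n" by (simp add: Gamma_mat_def)




lemma eig_P:
  assumes n: "4+\<tau> < n" and ev: "eigenvalue (Gamma_mat n \<tau>) k" and k: "k > -1"
  shows "Pp k (real \<tau>) (real (n-4-\<tau>)) = 0"
proof -
  obtain v where v: "v \<in> carrier_vec n" "v \<noteq> 0\<^sub>v n" "Gamma_mat n \<tau> *\<^sub>v v = k \<cdot>\<^sub>v v"
    using ev unfolding eigenvalue_def eigenvector_def by (auto simp: Gamma_mat_def)
  define SX where "SX = (\<Sum>j\<in>{4..<4+\<tau>}. v$j)"
  define SY where "SY = (\<Sum>j\<in>{4+\<tau>..<n}. v$j)"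
  define t where "t = real \<tau>"
  define s where "s = real (n-4-\<tau>)"
  define a where "a = v$0"
  define b where "b = v$1"
  define c where "c = v$2"
  define d where "d = v$3"
  define x where "x = (a+d+SX+SY)/(k+1)"
  define y where "y = (c+d+SX+SY)/(k+1)"
  have k1: "k + 1 \<noteq> 0" using k by auto
  have row: "(Gamma_mat n \<tau> *\<^sub>v v) $ i = k * v$i" if "i < n" for i
    using v(1,3) that by (metis carrier_vecD index_smult_vec(1))
  have R: "k * v$i = (if i = 0 then - b + d + SX else if i=1 then - a + c else if i=2 then b + SY
     else if i=3 then a+SX+SY else if i < 4+\<tau> then a+d+SX+SY - v$i
     else c+d+SX+SY-v$i)" if "i < n" for i
    using gam_row[OF n v(1) that] row[OF that] unfolding SX_def SY_def a_def b_def c_def d_def Let_def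
    by simp
  have vX: "v$i = x" if "4 \<le> i" "i < 4+\<tau>" for i
  proof -
    have "k * v$i = a+d+SX+SY - v$i" using R[of i] that n by auto
    hence "(k+1) * v$i = a+d+SX+SY" by (simp add: algebra_simps)
    thus ?thesis unfolding x_def using k1 by (simp add: field_simps)
  qed
  have vY: "v$i = y" if "4+\<tau> \<le> i" "i < n" for i
  proof -
    have "k * v$i = c+d+SX+SY - v$i" using R[of i] that n by auto
    hence "(k+1) * v$i = c+d+SX+SY" by (simp add: algebra_simps)
    thus ?thesis unfolding y_def using k1 by (simp add: field_simps)
  qed
  have SXe: "SX = t * x" unfolding SX_def t_def using vX by simp
  have SYe: "SY = s * y" unfolding SY_def s_def using vY by simp
  have e0: "k*a + b - d - t*x = 0" using R[of 0] n SXe unfolding a_def by auto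
  have e1: "a + k*b - c = 0" using R[of 1] n unfolding b_def by auto
  have e2: "- b + k*c - s*y = 0" using R[of 2] n SYe unfolding c_def by auto
  have e3: "- a + k*d - t*x - s*y = 0" using R[of 3] n SXe SYe unfolding d_def by auto
  have e4: "- a - d + (k - t + 1)*x - s*y = 0"
  proof -
    have "(k+1)*x = a+d+SX+SY" unfolding x_def using k1 by simp
    thus ?thesis using SXe SYe by (simp add: algebra_simps)
  qed
  have e5: "- c - d - t*x + (k - s + 1)*y = 0"
  proof -
    have "(k+1)*y = c+d+SX+SY" unfolding y_def using k1 by simp
    thus ?thesis using SXe SYe by (simp add: algebra_simps)
  qed
  note C = cert[OF e0 e1 e2 e3 e4 e5]
  show ?thesis
  proof (rule ccontr)
    assume P: "Pp k (real \<tau>) (real (n-4-\<tau>)) \<noteq> 0"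
    hence z: "a = 0" "b = 0" "c = 0" "d = 0" "x = 0" "y = 0" using C unfolding t_def s_def by auto
    have "v = 0\<^sub>v n"
    proof (rule eq_vecI)
      fix i assume "i < dim_vec (0\<^sub>v n :: real vec)"
      hence i: "i < n" by simp
      show "v $ i = 0\<^sub>v n $ i"
      proof -
        have "v$i = 0"
        proof (cases "i < 4")
          case True
          hence "i = 0 \<or> i = 1 \<or> i = 2 \<or> i = 3" by auto
          thus ?thesis using z unfolding a_def b_def c_def d_def by auto
        next
          case False
          thus ?thesis using vX vY z i by (cases "i < 4 + \<tau>") auto
        qed
        thus ?thesis using i by simp
      qed
    next
      show "dim_vec v = dim_vec (0\<^sub>v n :: real vec)" using v(1) by simp
    qed
    thus False using v(2) by simp
  qed
qed




lemma w5_pos: "k > 2 \<Longrightarrow> k^4 + k^3 - 2*k^2 - 3*k - 1 > (0::real)"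
proof -
  assume k: "k > 2"
  have kk: "k*k > 2*2" using k by (intro mult_strict_mono) auto
  have s2: "k^2 = k*k" by (simp add: power2_eq_square)
  have a: "k^4 = (k*k) * (k*k)" by (simp add: eval_nat_numeral)
  have b: "k^3 = k * (k*k)" by (simp add: eval_nat_numeral)
  have "(k*k) * (k*k) \<ge> 4 * (k*k)" using kk by (intro mult_right_mono) auto
  moreover have "k * (k*k) \<ge> k * 4" by (rule mult_left_mono) (use kk k in auto)
  ultimately show ?thesis unfolding a b s2 using kk k by linarith
qed

lemma P_root_eig:
  assumes n: "4+\<tau> < n" and P: "Pp k (real \<tau>) (real (n-4-\<tau>)) = 0" and k: "k > 2"
  shows "eigenvalue (Gamma_mat n \<tau>) k"
proof -
  define t where "t = real \<tau>"
  define s where "s = real (n-4-\<tau>)"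
  define w0 where "w0 = (k^4 - (k^3)*s + 2*k^3 - 2*k^2*s - k*s - 2*k - 1)"
  define w1 where "w1 = (- (k^3) + 2*k^2*s - 2*k^2 + 3*k*s - k + s)"
  define w2 where "w2 = (k^3*s + k^2*s - k^2 - 2*k - 1)"
  define w3 where "w3 = (k^5 - k^4*t - k^4*s + 2*k^4 - 2*k^3*t - 2*k^3*s - k^3 + 2*k^2*t*s + k^2*t + k^2*s - 4*k^2 + k*t*s + 3*k*t + 3*k*s - 2*k + t + s)"
  define w4 where "w4 = (k^4 + 2*k^3 - 2*k^2*s - k^2 - k*s - 3*k - 1)"
  define w5 where "w5 = (k^4 + k^3 - 2*k^2 - 3*k - 1)"
  note CV = colvec[OF w0_def w1_def w2_def w3_def w4_def w5_def]
  have P': "Pp k t s = 0" using P unfolding t_def s_def .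
  define w where "w = vec n (\<lambda>i. if i=0 then w0 else if i=1 then w1 else if i=2 then w2 else if i=3 then w3 else if i<4+\<tau> then w4 else w5)"
  have wc: "w \<in> carrier_vec n" unfolding w_def by simp
  have w5: "w5 \<noteq> 0" using w5_pos[OF k] unfolding w5_def by simp
  have wn: "w \<noteq> 0\<^sub>v n"
  proof
    assume "w = 0\<^sub>v n"
    hence "w $ (n-1) = 0" using n by simp
    moreover have "w $ (n-1) = w5"
    proof -
      define j where "j = n - 1"
      have j: "j < n" "j \<noteq> 0" "j \<noteq> 1" "j \<noteq> 2" "j \<noteq> 3" "\<not> j < 4+\<tau>" using n unfolding j_def by auto
      show ?thesis unfolding j_def[symmetric] using j by (simp add: w_def)
    qed
    ultimately show False using w5 by simp
  qed
  have SX: "(\<Sum>j\<in>{4..<4+\<tau>}. w$j) = t * w4" unfolding t_def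
  proof -
    have "(\<Sum>j\<in>{4..<4+\<tau>}. w$j) = (\<Sum>j\<in>{4..<4+\<tau>}. w4)"
      by (rule sum.cong, simp, insert n, auto simp: w_def)
    thus "(\<Sum>j\<in>{4..<4+\<tau>}. w$j) = real \<tau> * w4" by simp
  qed
  have SY: "(\<Sum>j\<in>{4+\<tau>..<n}. w$j) = s * w5" unfolding s_def
  proof -
    have "(\<Sum>j\<in>{4+\<tau>..<n}. w$j) = (\<Sum>j\<in>{4+\<tau>..<n}. w5)"
      by (rule sum.cong, simp, auto simp: w_def)
    thus "(\<Sum>j\<in>{4+\<tau>..<n}. w$j) = real (n-4-\<tau>) * w5" by simp
  qed
  have w03: "w$0 = w0" "w$1 = w1" "w$2 = w2" "w$3 = w3" using n by (simp_all add: w_def)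
  have wX: "w$i = w4" if "4 \<le> i" "i < 4+\<tau>" for i using that n by (simp add: w_def)
  have wY: "w$i = w5" if "4+\<tau> \<le> i" "i < n" for i using that n by (simp add: w_def)
  have "Gamma_mat n \<tau> *\<^sub>v w = k \<cdot>\<^sub>v w"
  proof (rule eq_vecI)
    show "dim_vec (Gamma_mat n \<tau> *\<^sub>v w) = dim_vec (k \<cdot>\<^sub>v w)" using wc by (simp add: Gamma_mat_def)
  next
    fix i assume "i < dim_vec (k \<cdot>\<^sub>v w)"
    hence i: "i < n" using wc by simp
    have G: "(Gamma_mat n \<tau> *\<^sub>v w) $ i = (if i = 0 then - w1 + w3 + t*w4 else if i=1 then - w0 + w2 else if i=2 then w1 + s*w5
     else if i=3 then w0+t*w4+s*w5 else if i < 4+\<tau> then w0+w3+t*w4+s*w5 - w4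
     else w2+w3+t*w4+s*w5-w5)"
      using gam_row[OF n wc i] i wX[of i] wY[of i] unfolding Let_def SX SY w03 by auto
    have K: "(k \<cdot>\<^sub>v w) $ i = k * (if i=0 then w0 else if i=1 then w1 else if i=2 then w2 else if i=3 then w3 else if i<4+\<tau> then w4 else w5)"
      using i by (simp add: w_def)
    have c4: "- w0 - w3 + k*w4 - t*w4 + w4 - s*w5 = 0" using CV(5) by (simp add: algebra_simps)
    have c5: "- w2 - w3 - t*w4 + k*w5 - s*w5 + w5 = 0" using CV(6) by (simp add: algebra_simps)
    have "i=0 \<or> i=1 \<or> i=2 \<or> i=3 \<or> (4 \<le> i \<and> i < 4+\<tau>) \<or> (4+\<tau> \<le> i)" by auto
    then show "(Gamma_mat n \<tau> *\<^sub>v w) $ i = (k \<cdot>\<^sub>v w) $ i"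
    proof (elim disjE)
      assume "i = 0" thus ?thesis unfolding G K using CV(1) by simp
    next
      assume "i = 1" thus ?thesis unfolding G K using CV(2) by simp
    next
      assume "i = 2" thus ?thesis unfolding G K using CV(3) by simp
    next
      assume "i = 3" thus ?thesis unfolding G K using CV(4) P' by simp
    next
      assume "4 \<le> i \<and> i < 4+\<tau>" thus ?thesis unfolding G K using c4 by simp
    next
      assume "4+\<tau> \<le> i" thus ?thesis unfolding G K using c5 by simp
    qed
  qed
  thus ?thesis unfolding eigenvalue_def eigenvector_def using wc wn by (auto simp: Gamma_mat_def)
qed




lemma fin_eig: "finite {k. eigenvalue (Gamma_mat n \<tau>) k}"
  using card_finite_spectrum(1)[OF carrier_G[of n \<tau>]] unfolding spectrum_def by simp

lemma lam_ge: "eigenvalue (Gamma_mat n \<tau>) k \<Longrightarrow> k \<le> lambda1 (Gamma_mat n \<tau>)"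
  unfolding lambda1_def by (rule Max_ge[OF fin_eig]) simp

lemma lam_in: "eigenvalue (Gamma_mat n \<tau>) k \<Longrightarrow> eigenvalue (Gamma_mat n \<tau>) (lambda1 (Gamma_mat n \<tau>))"
  unfolding lambda1_def using Max_in[OF fin_eig, of n \<tau>] by auto

lemma ff_neg: "ff n (real n - 4) < 0"
proof -
  have "ff n (real n - 4) = - ((real n - 4)^2 + (real n - 4) + 1)"
    by (simp add: ff_def algebra_simps eval_nat_numeral)
  moreover have "(real n - 4)^2 + (real n - 4) + 1 > 0"
  proof (cases "real n - 4 \<ge> 0")
    case True thus ?thesis by (smt (verit) zero_le_power2)
  next
    case False
    have "(real n - 4)^2 + (real n - 4) + 1 = ((real n - 4) + 1/2)^2 + 3/4"
      by (simp add: algebra_simps power2_eq_square)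
    thus ?thesis using zero_le_power2[of "real n - 4 + 1/2"] by linarith
  qed
  ultimately show ?thesis by simp
qed

lemma ff_pos: assumes n: "n \<ge> 6" and x: "x \<ge> real n" shows "ff n x > 0"
proof -
  define m where "m = real n"
  have m6: "m \<ge> 6" using n unfolding m_def by simp
  have xm: "x \<ge> m" using x unfolding m_def .
  have e: "ff n x = x^2*(x - m + 6) - 3*(m-4)*x - m + 3"
    unfolding ff_def m_def by (simp add: algebra_simps eval_nat_numeral power2_eq_square)
  have 1: "x^2*(x-m+6) \<ge> x^2*6" using xm by (intro mult_left_mono) auto
  have 2: "x*x \<ge> m*x" using xm m6 by (intro mult_right_mono) auto
  have 3: "m*x \<ge> 0" using xm m6 by simp
  have 4: "x^2 = x*x" by (simp add: power2_eq_square)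
  have 5: "3*(m-4)*x = 3*(m*x) - 12*x" by (simp add: algebra_simps)
  show ?thesis unfolding e using 1 2 3 4 5 xm m6 by linarith
qed

lemma ff_cont: "continuous_on A (ff n)"
  unfolding ff_def by (intro continuous_intros)

lemma root_exists: assumes n: "n \<ge> 6" shows "\<exists>\<rho>. \<rho> > real n - 4 \<and> ff n \<rho> = 0"
proof -
  obtain x where x: "real n - 4 \<le> x" "x \<le> real n" "ff n x = 0"
    using IVT'[of "ff n" "real n - 4" 0 "real n"] ff_neg[of n] ff_pos[OF n, of "real n"] ff_cont
    by force
  have "x \<noteq> real n - 4" using x(3) ff_neg[of n] by auto
  thus ?thesis using x by (intro exI[of _ x]) auto
qed

lemma endpoint:
  assumes n: "n \<ge> 6" and \<tau>: "\<tau> = 0 \<or> \<tau> = n - 5"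
  shows "\<And>x. x > 2 \<Longrightarrow> ff n x = 0 \<Longrightarrow> eigenvalue (Gamma_mat n \<tau>) x"
    and "\<And>k. k > 2 \<Longrightarrow> eigenvalue (Gamma_mat n \<tau>) k \<Longrightarrow> ff n k = 0"
proof -
  have n4: "4 + \<tau> < n" using n \<tau> by auto
  have z: "real \<tau> * (real (n-4-\<tau>) - 1) = 0" using \<tau> n by auto
  have PP: "Pp k (real \<tau>) (real (n-4-\<tau>)) = (k+1)*ff n k*(k^2-k-1)" for k
    unfolding Pp_ff[OF n4] using z by simp
  have q: "k^2 - k - 1 > 0" if "k > 2" for k :: real
  proof -
    have "k*k > 2*k" using that by simp
    moreover have "k^2 = k*k" by (simp add: power2_eq_square)
    ultimately show ?thesis using that by linarith
  qed
  show "eigenvalue (Gamma_mat n \<tau>) x" if "x > 2" "ff n x = 0" for x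
    by (rule P_root_eig[OF n4 _ that(1)]) (subst PP, simp add: that(2))
  show "ff n k = 0" if "k > 2" "eigenvalue (Gamma_mat n \<tau>) k" for k
  proof -
    have "Pp k (real \<tau>) (real (n-4-\<tau>)) = 0" using eig_P[OF n4 that(2)] that(1) by simp
    hence "(k+1)*ff n k*(k^2-k-1) = 0" unfolding PP .
    thus ?thesis using q[OF that(1)] that(1) by simp
  qed
qed

lemma endpoint_lam:
  assumes n: "n \<ge> 6" and \<tau>: "\<tau> = 0 \<or> \<tau> = n - 5"
  shows "ff n (lambda1 (Gamma_mat n \<tau>)) = 0 \<and> lambda1 (Gamma_mat n \<tau>) > real n - 4
     \<and> (\<forall>x. ff n x = 0 \<longrightarrow> x \<le> lambda1 (Gamma_mat n \<tau>))"
proof -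
  obtain \<rho> where r: "\<rho> > real n - 4" "ff n \<rho> = 0" using root_exists[OF n] by auto
  have r2: "\<rho> > 2" using r n by simp
  have er: "eigenvalue (Gamma_mat n \<tau>) \<rho>" using endpoint(1)[OF n \<tau> r2 r(2)] .
  have L1: "\<rho> \<le> lambda1 (Gamma_mat n \<tau>)" using lam_ge[OF er] .
  have L2: "eigenvalue (Gamma_mat n \<tau>) (lambda1 (Gamma_mat n \<tau>))" using lam_in[OF er] .
  have f: "ff n (lambda1 (Gamma_mat n \<tau>)) = 0" using endpoint(2)[OF n \<tau> _ L2] L1 r2 by simp
  have "\<forall>x. ff n x = 0 \<longrightarrow> x \<le> lambda1 (Gamma_mat n \<tau>)"
  proof (intro allI impI)
    fix x assume fx: "ff n x = 0"
    show "x \<le> lambda1 (Gamma_mat n \<tau>)"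
    proof (cases "x > 2")
      case True thus ?thesis using lam_ge endpoint(1)[OF n \<tau> True fx] by blast
    next
      case False thus ?thesis using L1 r2 by simp
    qed
  qed
  moreover have "real n - 4 < lambda1 (Gamma_mat n \<tau>)" using L1 r(1) by linarith
  ultimately show ?thesis using f by blast
qed

lemma ff_above:
  assumes n: "n \<ge> 6" and L: "\<forall>x. ff n x = 0 \<longrightarrow> x \<le> L" and k: "k > L"
  shows "ff n k > 0"
proof (rule ccontr)
  assume "\<not> ff n k > 0"
  hence fk: "ff n k \<le> 0" by simp
  show False
  proof (cases "k \<ge> real n")
    case True thus False using ff_pos[OF n True] fk by simp
  next
    case False
    obtain x where x: "k \<le> x" "x \<le> real n" "ff n x = 0"
      using IVT'[of "ff n" k 0 "real n"] fk ff_pos[OF n, of "real n"] ff_cont False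
      by force
    thus False using L k by force
  qed
qed

lemma eig_m1:
  assumes n: "4 + \<tau> + 1 < n"
  shows "eigenvalue (Gamma_mat n \<tau>) (-1)"
proof -
  define p where "p = 4 + \<tau>"
  define q where "q = 5 + \<tau>"
  define v :: "real vec" where "v = vec n (\<lambda>j. if j = p then 1 else if j = q then -1 else 0)"
  have vc: "v \<in> carrier_vec n" unfolding v_def by simp
  have n4: "4 + \<tau> < n" using n by simp
  have SX: "(\<Sum>j\<in>{4..<4+\<tau>}. v$j) = 0"
    by (rule sum.neutral) (use n in \<open>auto simp: v_def p_def q_def\<close>)
  have "(\<Sum>j\<in>{4+\<tau>..<n}. v$j) = (\<Sum>j\<in>{4+\<tau>..<n}. (if j = p then 1 else 0) - (if j = q then 1 else 0))"
    by (rule sum.cong) (use n in \<open>auto simp: v_def p_def q_def\<close>)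
  also have "\<dots> = 0" using n by (simp add: sum_subtractf sum.delta p_def q_def)
  finally have SY: "(\<Sum>j\<in>{4+\<tau>..<n}. v$j) = 0" .
  have v03: "v$0 = 0" "v$1 = 0" "v$2 = 0" "v$3 = 0" using n by (auto simp: v_def p_def q_def)
  have "Gamma_mat n \<tau> *\<^sub>v v = (-1) \<cdot>\<^sub>v v"
  proof (rule eq_vecI)
    show "dim_vec (Gamma_mat n \<tau> *\<^sub>v v) = dim_vec ((-1) \<cdot>\<^sub>v v)" using vc by (simp add: Gamma_mat_def)
  next
    fix i assume "i < dim_vec ((-1::real) \<cdot>\<^sub>v v)"
    hence i: "i < n" using vc by simp
    have "(Gamma_mat n \<tau> *\<^sub>v v) $ i = - v$i"
      using gam_row[OF n4 vc i] SX SY v03 i unfolding Let_def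
      by (cases "i < 4") (auto simp: v_def p_def q_def)
    thus "(Gamma_mat n \<tau> *\<^sub>v v) $ i = ((-1) \<cdot>\<^sub>v v) $ i" using i vc by simp
  qed
  moreover have "v \<noteq> 0\<^sub>v n"
  proof
    assume "v = 0\<^sub>v n"
    hence "v $ p = 0" using n by (simp add: p_def)
    thus False using n by (simp add: v_def p_def)
  qed
  ultimately show ?thesis unfolding eigenvalue_def eigenvector_def using vc
    by (auto simp: Gamma_mat_def)
qed

theorem lemma2p2:
  fixes n \<tau> :: nat
  assumes "n \<ge> 6" and "\<tau> \<le> n - 5"
  shows "lambda1 (Gamma_mat n \<tau>) \<le> lambda1 (Gamma_mat n 0)
       \<and> lambda1 (Gamma_mat n 0) = lambda1 (Gamma_mat n (n - 5))
       \<and> (lambda1 (Gamma_mat n \<tau>) = lambda1 (Gamma_mat n 0) \<longleftrightarrow> \<tau> \<in> {0, n - 5})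
       \<and> lambda1 (Gamma_mat n 0) > real n - 4
       \<and> (let f = (\<lambda>x::real. x ^ 3 - (real n - 6) * x\<^sup>2 - 3 * (real n - 4) * x - real n + 3)
          in f (lambda1 (Gamma_mat n 0)) = 0 \<and> (\<forall>x. f x = 0 \<longrightarrow> x \<le> lambda1 (Gamma_mat n 0)))"
proof -
  note n = assms(1)
  define L0 where "L0 = lambda1 (Gamma_mat n 0)"
  define Le where "Le = lambda1 (Gamma_mat n (n-5))"
  define L where "L = lambda1 (Gamma_mat n \<tau>)"
  have E0: "ff n L0 = 0 \<and> L0 > real n - 4 \<and> (\<forall>x. ff n x = 0 \<longrightarrow> x \<le> L0)"
    unfolding L0_def using endpoint_lam[OF n, of 0] by simp
  have Ee: "ff n Le = 0 \<and> Le > real n - 4 \<and> (\<forall>x. ff n x = 0 \<longrightarrow> x \<le> Le)"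
    unfolding Le_def using endpoint_lam[OF n, of "n-5"] by simp
  have eq: "L0 = Le" using E0 Ee by (meson order_antisym)
  have fdef: "(\<lambda>x::real. x ^ 3 - (real n - 6) * x\<^sup>2 - 3 * (real n - 4) * x - real n + 3) = ff n"
    by (rule ext) (simp add: ff_def)
  have mid: "L < L0" if t0: "\<tau> \<noteq> 0" and t1: "\<tau> \<noteq> n - 5"
  proof -
    have tl: "1 \<le> \<tau>" "\<tau> + 6 \<le> n" using t0 t1 assms by auto
    have n4: "4 + \<tau> < n" using tl by simp
    have em: "eigenvalue (Gamma_mat n \<tau>) (-1)" by (rule eig_m1) (use tl in simp)
    have all: "k < L0" if ek: "eigenvalue (Gamma_mat n \<tau>) k" for k
    proof (rule ccontr)
      assume "\<not> k < L0"
      hence kL: "k \<ge> L0" by simp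
      have k2: "k > 2" using kL E0 n by simp
      have P0: "Pp k (real \<tau>) (real (n-4-\<tau>)) = 0" using eig_P[OF n4 ek] k2 by simp
      have fk: "ff n k \<ge> 0"
      proof (cases "k = L0")
        case True thus ?thesis using E0 by simp
      next
        case False thus ?thesis using ff_above[OF n, of L0 k] E0 kL by simp
      qed
      have q: "k^2 - k - 1 > 0"
      proof -
        have "k*k > 2*k" using k2 by simp
        moreover have "k^2 = k*k" by (simp add: power2_eq_square)
        ultimately show ?thesis using k2 by linarith
      qed
      have t1: "(k+1)*ff n k*(k^2-k-1) \<ge> 0" using fk q k2 by simp
      have s1: "real (n-4-\<tau>) - 1 \<ge> 1" using tl by auto
      have t2: "real \<tau>*(real (n-4-\<tau>)-1)*k*(k+1)*(2*k+1) > 0"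
        using tl s1 k2 by (intro mult_pos_pos) auto
      show False using P0 t1 t2 unfolding Pp_ff[OF n4] by simp
    qed
    have "eigenvalue (Gamma_mat n \<tau>) L" unfolding L_def by (rule lam_in[OF em])
    thus ?thesis using all by simp
  qed
  have part1: "L \<le> L0"
  proof (cases "\<tau> = 0 \<or> \<tau> = n - 5")
    case True thus ?thesis using eq unfolding L_def L0_def Le_def by auto
  next
    case False thus ?thesis using mid by auto
  qed
  have part3: "L = L0 \<longleftrightarrow> \<tau> \<in> {0, n - 5}"
  proof
    assume "L = L0" thus "\<tau> \<in> {0, n - 5}" using mid by force
  next
    assume "\<tau> \<in> {0, n - 5}" thus "L = L0" using eq unfolding L_def L0_def Le_def by auto
  qed
  show ?thesis
    unfolding fdef Let_def L0_def[symmetric] Le_def[symmetric] L_def[symmetric]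
    using part1 part3 eq E0 by simp
qed


end
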